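(* There is a constant $C>0$ depending only on the dimension $d$ such that for every $0<\lambda<1$, every Borel set $E\subset\mathbb{R}^d$ and every $x\in\mathbb{R}^d$, $$\chi_{\{M\chi_E>\lambda\}}(x)\le \frac{C}{\lambda(1-\log\lambda)}\,M\big(\chi_{\{M\chi_E>\lambda\}}\,M\chi_E\big)(x).$$
   Context: $M$ denotes the Hardy–Littlewood maximal operator on $\mathbb{R}^d$: $Mf(x)=\sup_{Q\ni x}\frac{1}{|Q|}\int_Q|f(y)|\,dy$, the supremum over all cubes $Q$ containing $x$. *)

theory Defs
  imports "HOL-Analysis.Analysis"
begin

definition cubes :: "'a::euclidean_space set set" where
  "cubes = {cbox a (a + s *\<^sub>R One) | a s. s > 0}"

text \<open>Hardy--Littlewood maximal operator over cubes containing the point,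
  for nonnegative (ennreal-valued) functions, i.e. acting on the modulus.\<close>
definition hl_max :: "('a::euclidean_space \<Rightarrow> ennreal) \<Rightarrow> 'a \<Rightarrow> ennreal" where
  "hl_max f x = (SUP Q \<in> {Q \<in> cubes. x \<in> Q}.
      (\<integral>\<^sup>+ y. f y * indicator Q y \<partial>lborel) / emeasure lborel Q)"

end

theory Submission
  imports Defs
begin

definition gidx :: "'a::euclidean_space \<Rightarrow> real \<Rightarrow> nat \<Rightarrow> 'a \<Rightarrow> 'a \<Rightarrow> int" where
  "gidx q s k y = restrict (\<lambda>b. \<lfloor>(y \<bullet> b - q \<bullet> b) / (s / 2^k)\<rfloor>) Basis"

definition dcube :: "'a::euclidean_space \<Rightarrow> real \<Rightarrow> nat \<Rightarrow> 'a \<Rightarrow> 'a set" where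
  "dcube q s k y = {w. gidx q s k w = gidx q s k y}"

definition corner :: "'a::euclidean_space \<Rightarrow> real \<Rightarrow> nat \<Rightarrow> 'a \<Rightarrow> 'a" where
  "corner q s k y = (\<Sum>b\<in>Basis. (q \<bullet> b + of_int \<lfloor>(y \<bullet> b - q \<bullet> b) / (s / 2^k)\<rfloor> * (s / 2^k)) *\<^sub>R b)"

definition hobox :: "'a::euclidean_space \<Rightarrow> real \<Rightarrow> 'a set" where
  "hobox c h = {w. \<forall>b\<in>Basis. c \<bullet> b \<le> w \<bullet> b \<and> w \<bullet> b < c \<bullet> b + h}"

lemma dcube_self: "y \<in> dcube q s k y"
  by (simp add: dcube_def)

lemma dcube_eq: "w \<in> dcube q s k y \<Longrightarrow> dcube q s k w = dcube q s k y"
  by (simp add: dcube_def)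

lemma dcube_disj: "w \<in> dcube q s k y \<Longrightarrow> w \<in> dcube q s k y' \<Longrightarrow> dcube q s k y = dcube q s k y'"
  by (simp add: dcube_def)

lemma floor_half: "\<lfloor>u / 2\<rfloor> = \<lfloor>u::real\<rfloor> div 2"
  using floor_divide_real_eq_div[of 2 u] by simp

lemma gidx_Suc:
  assumes "s > 0" "gidx q s (Suc k) w = gidx q s (Suc k) y"
  shows "gidx q s k w = gidx q s k y"
proof -
  have "\<lfloor>(w \<bullet> b - q \<bullet> b) / (s / 2^k)\<rfloor> = \<lfloor>(y \<bullet> b - q \<bullet> b) / (s / 2^k)\<rfloor>" if b: "b \<in> Basis" for b
  proof -
    have e: "\<lfloor>(w \<bullet> b - q \<bullet> b) / (s / 2^Suc k)\<rfloor> = \<lfloor>(y \<bullet> b - q \<bullet> b) / (s / 2^Suc k)\<rfloor>"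
    proof -
      have "gidx q s (Suc k) w b = gidx q s (Suc k) y b" using assms(2) by simp
      then show ?thesis unfolding gidx_def restrict_apply'[OF b] .
    qed
    have hv: "(v::real) / (s / 2^k) = (v / (s / 2^Suc k)) / 2" for v
      using assms(1) by (simp add: field_simps)
    have "\<lfloor>(w \<bullet> b - q \<bullet> b) / (s / 2^k)\<rfloor> = \<lfloor>(w \<bullet> b - q \<bullet> b) / (s / 2^Suc k)\<rfloor> div 2"
      by (subst hv, rule floor_half)
    also have "\<dots> = \<lfloor>(y \<bullet> b - q \<bullet> b) / (s / 2^Suc k)\<rfloor> div 2" using e by simp
    also have "\<dots> = \<lfloor>(y \<bullet> b - q \<bullet> b) / (s / 2^k)\<rfloor>"
      by (subst hv, rule floor_half[symmetric])
    finally show ?thesis .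
  qed
  then show ?thesis unfolding gidx_def by (auto simp: restrict_def)
qed

lemma dcube_mono:
  assumes "s > 0" "k \<le> k'"
  shows "dcube q s k' y \<subseteq> dcube q s k y"
  using assms(2)
proof (induction k' rule: dec_induct)
  case base then show ?case by simp
next
  case (step n)
  then show ?case unfolding dcube_def using gidx_Suc[OF assms(1)] by blast
qed

lemma floor_eq_iff_h:
  assumes "h > 0"
  shows "(\<lfloor>v / h\<rfloor> = n) \<longleftrightarrow> (of_int n * h \<le> v \<and> v < of_int n * h + h)"
proof -
  have "(\<lfloor>v / h\<rfloor> = n) \<longleftrightarrow> (of_int n \<le> v / h \<and> v / h < of_int n + 1)"
    by (simp add: floor_eq_iff)
  also have "\<dots> \<longleftrightarrow> (of_int n * h \<le> v \<and> v < of_int n * h + h)"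
    using assms by (simp add: field_simps)
  finally show ?thesis .
qed

lemma dcube_hobox:
  assumes "s > 0"
  shows "dcube q s k y = hobox (corner q s k y) (s / 2^k)"
proof -
  let ?h = "s / 2^k"
  have h: "?h > 0" using assms by simp
  have cb: "corner q s k y \<bullet> b = q \<bullet> b + of_int \<lfloor>(y \<bullet> b - q \<bullet> b) / ?h\<rfloor> * ?h" if "b \<in> Basis" for b
    unfolding corner_def using that by (simp add: inner_sum_left inner_Basis if_distrib cong: if_cong)
  have "(\<lfloor>(w \<bullet> b - q \<bullet> b) / ?h\<rfloor> = \<lfloor>(y \<bullet> b - q \<bullet> b) / ?h\<rfloor>) \<longleftrightarrow>
        (corner q s k y \<bullet> b \<le> w \<bullet> b \<and> w \<bullet> b < corner q s k y \<bullet> b + ?h)" if "b \<in> Basis" for b w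
    unfolding cb[OF that] floor_eq_iff_h[OF h] by (auto simp: algebra_simps)
  then show ?thesis
    unfolding dcube_def hobox_def gidx_def restrict_def fun_eq_iff by auto
qed

lemma hobox_borel[measurable]: "hobox c h \<in> sets borel"
  unfolding hobox_def by measurable

lemma hobox_lborel[measurable]: "hobox c h \<in> sets lborel"
  by simp

lemma One_inner_Basis: "b \<in> Basis \<Longrightarrow> One \<bullet> b = 1"
  by (simp add: inner_sum_left inner_Basis)

lemma box_sub_hobox: "box c (c + h *\<^sub>R One) \<subseteq> hobox c h"
  using less_imp_le by (fastforce simp: mem_box hobox_def inner_add_left One_inner_Basis)

lemma hobox_sub_cbox: "hobox c h \<subseteq> cbox c (c + h *\<^sub>R One)"
  using less_imp_le by (fastforce simp: mem_box hobox_def inner_add_left One_inner_Basis)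

lemma emeasure_hobox:
  fixes c :: "'a::euclidean_space"
  assumes "h \<ge> 0"
  shows "emeasure lborel (hobox c h) = ennreal (h ^ DIM('a))"
    and "emeasure lborel (cbox c (c + h *\<^sub>R One)) = ennreal (h ^ DIM('a))"
proof -
  have b: "emeasure lborel (box c (c + h *\<^sub>R One)) = ennreal (h ^ DIM('a))"
    using assms by (simp add: inner_add_left One_inner_Basis prod_constant)
  have cb: "emeasure lborel (cbox c (c + h *\<^sub>R One)) = ennreal (h ^ DIM('a))"
    using assms by (simp add: inner_add_left One_inner_Basis prod_constant)
  have "emeasure lborel (box c (c + h *\<^sub>R One)) \<le> emeasure lborel (hobox c h)"
    by (intro emeasure_mono box_sub_hobox) simp
  moreover have "emeasure lborel (hobox c h) \<le> emeasure lborel (cbox c (c + h *\<^sub>R One))"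
    by (intro emeasure_mono hobox_sub_cbox) simp
  ultimately show "emeasure lborel (hobox c h) = ennreal (h ^ DIM('a))"
    using b cb by simp
  show "emeasure lborel (cbox c (c + h *\<^sub>R One)) = ennreal (h ^ DIM('a))" by (fact cb)
qed

lemma cbox_in_cubes: "h > 0 \<Longrightarrow> cbox c (c + h *\<^sub>R One) \<in> cubes"
  unfolding cubes_def by blast

lemma hl_max_ge_cube:
  assumes "Q \<in> cubes" "y \<in> Q"
  shows "(\<integral>\<^sup>+ z. f z * indicator Q z \<partial>lborel) / emeasure lborel Q \<le> hl_max f y"
  unfolding hl_max_def using assms by (intro SUP_upper) auto

lemma hl_max_ge_hobox:
  fixes c :: "'a::euclidean_space"
  assumes "h > 0" "y \<in> hobox c h"
  shows "(\<integral>\<^sup>+ z. f z * indicator (hobox c h) z \<partial>lborel) / emeasure lborel (hobox c h) \<le> hl_max f y"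
proof -
  let ?Q = "cbox c (c + h *\<^sub>R One)"
  have "(\<integral>\<^sup>+ z. f z * indicator (hobox c h) z \<partial>lborel) \<le> (\<integral>\<^sup>+ z. f z * indicator ?Q z \<partial>lborel)"
    using hobox_sub_cbox[of c h]
    by (intro nn_integral_mono mult_left_mono) (auto split: split_indicator)
  then have "(\<integral>\<^sup>+ z. f z * indicator (hobox c h) z \<partial>lborel) / emeasure lborel (hobox c h)
     \<le> (\<integral>\<^sup>+ z. f z * indicator ?Q z \<partial>lborel) / emeasure lborel ?Q"
    using emeasure_hobox[of h c] assms(1) by (simp add: divide_right_mono_ennreal)
  also have "\<dots> \<le> hl_max f y"
    using assms hobox_sub_cbox[of c h] by (intro hl_max_ge_cube cbox_in_cubes) auto
  finally show ?thesis .
qed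

lemma dcube_borel[measurable]: "s > 0 \<Longrightarrow> dcube q s k y \<in> sets lborel"
  by (simp add: dcube_hobox)

lemma dcube_borel'[measurable]: "s > 0 \<Longrightarrow> dcube q s k y \<in> sets borel"
  by (simp add: dcube_hobox)

lemma emeasure_dcube:
  fixes q :: "'a::euclidean_space"
  shows "s > 0 \<Longrightarrow> emeasure lborel (dcube q s k y) = ennreal ((s / 2^k) ^ DIM('a))"
  by (simp add: dcube_hobox emeasure_hobox)

lemma emeasure_dcube_Suc:
  fixes q :: "'a::euclidean_space"
  assumes "s > 0"
  shows "emeasure lborel (dcube q s k y) = ennreal (2 ^ DIM('a)) * emeasure lborel (dcube q s (Suc k) y)"
proof -
  have e: "s / 2^k = 2 * (s / 2^Suc k)" by simp
  have "(s / 2^k) ^ DIM('a) = 2 ^ DIM('a) * (s / 2^Suc k) ^ DIM('a)"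
    unfolding e power_mult_distrib ..
  then show ?thesis using assms
    by (simp add: emeasure_dcube ennreal_mult[symmetric])
qed

lemma dcube0: "s > 0 \<Longrightarrow> dcube q s 0 q = hobox q s"
proof -
  assume s: "s > 0"
  have "corner q s 0 q = (\<Sum>b\<in>Basis. (q \<bullet> b) *\<^sub>R b)"
    unfolding corner_def by simp
  also have "\<dots> = q" by (rule euclidean_representation)
  finally show ?thesis using s by (simp add: dcube_hobox)
qed

lemma dcube_diam:
  fixes q :: "'a::euclidean_space"
  assumes "s > 0" "w \<in> dcube q s k y"
  shows "norm (w - y) \<le> DIM('a) * (s / 2^k)"
proof -
  let ?c = "corner q s k y" and ?h = "s / 2^k"
  have w: "w \<in> hobox ?c ?h" and y: "y \<in> hobox ?c ?h"
    using assms dcube_self[of y q s k] by (simp_all add: dcube_hobox)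
  have "\<bar>(w - y) \<bullet> b\<bar> \<le> ?h" if "b \<in> Basis" for b
    using w y that unfolding hobox_def by (fastforce simp: inner_diff_left abs_le_iff)
  then have "(\<Sum>b\<in>Basis. \<bar>(w - y) \<bullet> b\<bar>) \<le> (\<Sum>b\<in>(Basis::'a set). ?h)"
    by (intro sum_mono)
  then show ?thesis using norm_le_l1[of "w - y"] by simp
qed

lemma countable_dcubes: "countable {dcube q s k y | k y. True}"
proof -
  have "{dcube q s k y | k y. True} \<subseteq> (\<lambda>(k, z). {w. gidx q s k w = z}) ` (UNIV \<times> (Basis \<rightarrow>\<^sub>E (UNIV::int set)))"
  proof
    fix A assume "A \<in> {dcube q s k y | k y. True}"
    then obtain k y where A: "A = dcube q s k y" by blast
    have "gidx q s k y \<in> Basis \<rightarrow>\<^sub>E (UNIV::int set)"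
      unfolding gidx_def by simp
    then show "A \<in> (\<lambda>(k, z). {w. gidx q s k w = z}) ` (UNIV \<times> (Basis \<rightarrow>\<^sub>E (UNIV::int set)))"
      unfolding A dcube_def by (intro image_eqI[where x="(k, gidx q s k y)"]) auto
  qed
  moreover have "countable (UNIV \<times> (Basis \<rightarrow>\<^sub>E (UNIV::int set)) :: (nat \<times> ('a \<Rightarrow> int)) set)"
    by (intro countable_SIGMA countable_PiE) auto
  ultimately show ?thesis
    by (meson countable_image countable_subset)
qed

lemma hl_max_ge_dcube:
  fixes q :: "'a::euclidean_space"
  assumes "s > 0" "y \<in> dcube q s k y'"
  shows "(\<integral>\<^sup>+ z. f z * indicator (dcube q s k y') z \<partial>lborel) / emeasure lborel (dcube q s k y') \<le> hl_max f y"
  using assms hl_max_ge_hobox[of "s / 2^k" y "corner q s k y'" f] by (simp add: dcube_hobox)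

lemma nn_integral_ind_ind:
  assumes [measurable]: "F \<in> sets lborel" "P \<in> sets lborel"
  shows "(\<integral>\<^sup>+ z. indicator F z * indicator P z \<partial>lborel) = emeasure lborel (F \<inter> P)"
proof -
  have "(\<lambda>z. indicator F z * indicator P z :: ennreal) = indicator (F \<inter> P)"
    by (auto simp: fun_eq_iff split: split_indicator)
  then show ?thesis by simp
qed

lemma sum_bound_family:
  fixes c :: ennreal
  assumes T: "countable T" "disjoint T" "T \<subseteq> sets lborel" and F[measurable]: "F \<in> sets lborel"
    and bd: "\<And>A. A \<in> T \<Longrightarrow> emeasure lborel (F \<inter> A) \<le> c * emeasure lborel A"
  shows "emeasure lborel (F \<inter> \<Union>T) \<le> c * emeasure lborel (\<Union>T)"
proof -
  have dj: "disjoint_family_on (\<lambda>A. A) T"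
    using T(2) unfolding disjoint_family_on_def disjoint_def by auto
  have dj2: "disjoint_family_on (\<lambda>A. F \<inter> A) T"
    using T(2) unfolding disjoint_family_on_def disjoint_def by auto
  have e1: "emeasure lborel (\<Union>T) = (\<integral>\<^sup>+A. emeasure lborel A \<partial>count_space T)"
    using emeasure_UN_countable[of T "\<lambda>A. A" lborel] T dj by auto
  have e2: "emeasure lborel (F \<inter> \<Union>T) = (\<integral>\<^sup>+A. emeasure lborel (F \<inter> A) \<partial>count_space T)"
  proof -
    have "F \<inter> \<Union>T = (\<Union>A\<in>T. F \<inter> A)" by auto
    moreover have "emeasure lborel (\<Union>A\<in>T. F \<inter> A) = (\<integral>\<^sup>+A. emeasure lborel (F \<inter> A) \<partial>count_space T)"
      using T dj2 by (intro emeasure_UN_countable) auto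
    ultimately show ?thesis by simp
  qed
  have "(\<integral>\<^sup>+A. emeasure lborel (F \<inter> A) \<partial>count_space T) \<le> (\<integral>\<^sup>+A. c * emeasure lborel A \<partial>count_space T)"
    using bd by (intro nn_integral_mono) auto
  also have "\<dots> = c * (\<integral>\<^sup>+A. emeasure lborel A \<partial>count_space T)"
    by (rule nn_integral_cmult) simp
  finally show ?thesis using e1 e2 by simp
qed

definition stopk :: "'a::euclidean_space \<Rightarrow> real \<Rightarrow> ('a set \<Rightarrow> bool) \<Rightarrow> 'a \<Rightarrow> nat" where
  "stopk q s P y = (LEAST k. P (dcube q s k y))"

definition sfam :: "'a::euclidean_space \<Rightarrow> real \<Rightarrow> ('a set \<Rightarrow> bool) \<Rightarrow> 'a set set" where
  "sfam q s P = {dcube q s (stopk q s P y) y | y. \<exists>k. P (dcube q s k y)}"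

lemma stopk_P: "\<exists>k. P (dcube q s k y) \<Longrightarrow> P (dcube q s (stopk q s P y) y)"
  unfolding stopk_def by (rule LeastI_ex)

lemma stopk_le: "P (dcube q s k y) \<Longrightarrow> stopk q s P y \<le> k"
  unfolding stopk_def by (rule Least_le)

lemma stopk_min: "k < stopk q s P y \<Longrightarrow> \<not> P (dcube q s k y)"
  unfolding stopk_def by (rule not_less_Least)

lemma sfam_countable: "countable (sfam q s P)"
  by (rule countable_subset[OF _ countable_dcubes[of q s]]) (auto simp: sfam_def)

lemma sfam_sets: "s > 0 \<Longrightarrow> sfam q s P \<subseteq> sets lborel"
  using dcube_borel unfolding sfam_def by blast

lemma sfam_aux:
  assumes s: "s > 0" and ex: "\<exists>k. P (dcube q s k y)" "\<exists>k. P (dcube q s k y')"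
    and le: "stopk q s P y \<le> stopk q s P y'"
    and w: "w \<in> dcube q s (stopk q s P y) y" "w \<in> dcube q s (stopk q s P y') y'"
  shows "dcube q s (stopk q s P y) y = dcube q s (stopk q s P y') y'"
proof -
  let ?m = "stopk q s P y" and ?m' = "stopk q s P y'"
  have "dcube q s ?m' y' = dcube q s ?m' w" using dcube_eq[OF w(2)] by simp
  also have "\<dots> \<subseteq> dcube q s ?m w" by (rule dcube_mono[OF s le])
  also have "\<dots> = dcube q s ?m y" using dcube_eq[OF w(1)] .
  finally have y': "y' \<in> dcube q s ?m y" using dcube_self[of y' q s ?m'] by blast
  then have eqm: "dcube q s ?m y' = dcube q s ?m y" by (rule dcube_eq)
  have "P (dcube q s ?m y')" using stopk_P[OF ex(1)] eqm by simp
  then have "?m' \<le> ?m" by (rule stopk_le)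
  then have "?m' = ?m" using le by simp
  then show ?thesis using eqm by simp
qed

lemma sfam_disjoint:
  assumes s: "s > 0"
  shows "disjoint (sfam q s P)"
proof (rule disjointI)
  fix A B assume A: "A \<in> sfam q s P" and B: "B \<in> sfam q s P" and ne: "A \<noteq> B"
  obtain y where y: "A = dcube q s (stopk q s P y) y" "\<exists>k. P (dcube q s k y)" using A by (auto simp: sfam_def)
  obtain y' where y': "B = dcube q s (stopk q s P y') y'" "\<exists>k. P (dcube q s k y')" using B by (auto simp: sfam_def)
  show "A \<inter> B = {}"
  proof (rule ccontr)
    assume "A \<inter> B \<noteq> {}"
    then obtain w where w: "w \<in> A" "w \<in> B" by blast
    show False
    proof (cases "stopk q s P y \<le> stopk q s P y'")
      case True
      then show False using sfam_aux[OF s y(2) y'(2) True] w y y' ne by simp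
    next
      case False
      then have "stopk q s P y' \<le> stopk q s P y" by simp
      then show False using sfam_aux[OF s y'(2) y(2)] w y y' ne by simp
    qed
  qed
qed

lemma sfam_Union: "\<Union>(sfam q s P) = {y. \<exists>k. P (dcube q s k y)}"
proof
  show "\<Union>(sfam q s P) \<subseteq> {y. \<exists>k. P (dcube q s k y)}"
  proof
    fix w assume "w \<in> \<Union>(sfam q s P)"
    then obtain y where y: "w \<in> dcube q s (stopk q s P y) y" "\<exists>k. P (dcube q s k y)"
      by (auto simp: sfam_def)
    have "P (dcube q s (stopk q s P y) w)" using stopk_P[OF y(2)] dcube_eq[OF y(1)] by simp
    then show "w \<in> {y. \<exists>k. P (dcube q s k y)}" by blast
  qed
next
  show "{y. \<exists>k. P (dcube q s k y)} \<subseteq> \<Union>(sfam q s P)"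
    using dcube_self unfolding sfam_def by blast
qed

lemma sfam_elem:
  assumes "A \<in> sfam q s P"
  obtains y m where "A = dcube q s m y" "P A" "\<And>k. k < m \<Longrightarrow> \<not> P (dcube q s k y)"
  using assms stopk_P stopk_min unfolding sfam_def by blast

lemma measure_dcube:
  fixes q :: "'a::euclidean_space"
  shows "s > 0 \<Longrightarrow> measure lborel (dcube q s k y) = (s / 2^k) ^ DIM('a)"
  by (simp add: measure_def emeasure_dcube)

lemma measure_dcube_Suc:
  fixes q :: "'a::euclidean_space"
  assumes "s > 0"
  shows "measure lborel (dcube q s k y) = 2 ^ DIM('a) * measure lborel (dcube q s (Suc k) y)"
proof -
  have e: "s / 2^k = 2 * (s / 2^Suc k)" by simp
  have "(s / 2^k) ^ DIM('a) = 2 ^ DIM('a) * (s / 2^Suc k) ^ DIM('a)"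
    unfolding e power_mult_distrib ..
  then show ?thesis using assms by (simp add: measure_dcube)
qed

lemma dcube_fmeas: "s > 0 \<Longrightarrow> dcube q s k y \<in> fmeasurable lborel"
  using dcube_borel' by (auto simp: fmeasurable_def emeasure_dcube)

lemma hobox_fmeas: "h \<ge> 0 \<Longrightarrow> hobox c h \<in> fmeasurable lborel"
  by (auto simp: fmeasurable_def emeasure_hobox)

lemma measure_hobox:
  fixes c :: "'a::euclidean_space"
  shows "h \<ge> 0 \<Longrightarrow> measure lborel (hobox c h) = h ^ DIM('a)"
  by (simp add: measure_def emeasure_hobox)

lemma hl_max_ge_dcube_real:
  fixes q :: "'a::euclidean_space"
  assumes s: "s > 0" and F[measurable]: "F \<in> sets lborel" and y: "y \<in> dcube q s k y'"
  shows "ennreal (measure lborel (F \<inter> dcube q s k y') / measure lborel (dcube q s k y')) \<le> hl_max (indicator F) y"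
proof -
  let ?D = "dcube q s k y'"
  have D[measurable]: "?D \<in> sets lborel" using s by (rule dcube_borel)
  have fin: "emeasure lborel (F \<inter> ?D) \<noteq> top"
  proof -
    have "emeasure lborel (F \<inter> ?D) \<le> emeasure lborel ?D" using D by (intro emeasure_mono) auto
    then show ?thesis using s by (auto simp: emeasure_dcube top_unique)
  qed
  have "(\<integral>\<^sup>+ z. indicator F z * indicator ?D z \<partial>lborel) / emeasure lborel ?D \<le> hl_max (indicator F) y"
    by (rule hl_max_ge_dcube[OF s y])
  moreover have "(\<integral>\<^sup>+ z. indicator F z * indicator ?D z \<partial>lborel) = ennreal (measure lborel (F \<inter> ?D))"
    using nn_integral_ind_ind[OF F D] emeasure_eq_ennreal_measure[OF fin] by simp
  moreover have "emeasure lborel ?D = ennreal (measure lborel ?D)"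
    using s by (simp add: emeasure_dcube measure_dcube)
  moreover have "measure lborel ?D > 0" using s by (simp add: measure_dcube)
  ultimately show ?thesis by (simp add: divide_ennreal)
qed

lemma sum_bound_family_real:
  assumes T: "countable T" "disjoint T" "T \<subseteq> sets lborel" and F[measurable]: "F \<in> sets lborel"
    and B: "\<Union>T \<subseteq> B" "B \<in> fmeasurable lborel" and c: "c \<ge> 0"
    and bd: "\<And>A. A \<in> T \<Longrightarrow> measure lborel (F \<inter> A) \<le> c * measure lborel A"
  shows "measure lborel (F \<inter> \<Union>T) \<le> c * measure lborel (\<Union>T)"
proof -
  have UT[measurable]: "\<Union>T \<in> sets lborel" using T by (intro sets.countable_Union) auto
  have finB: "emeasure lborel B < top" using B(2) by (auto simp: fmeasurable_def)
  have fin: "emeasure lborel X \<noteq> top" if "X \<subseteq> B" for X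
  proof -
    have "emeasure lborel X \<le> emeasure lborel B" using that B(2) by (intro emeasure_mono) (auto simp: fmeasurable_def)
    then show ?thesis using finB by (auto simp: top_unique)
  qed
  have "emeasure lborel (F \<inter> A) \<le> ennreal c * emeasure lborel A" if A: "A \<in> T" for A
  proof -
    have "A \<subseteq> B" using A B(1) by auto
    then have "emeasure lborel (F \<inter> A) = ennreal (measure lborel (F \<inter> A))"
      "emeasure lborel A = ennreal (measure lborel A)"
      using fin[of "F \<inter> A"] fin[of A] emeasure_eq_ennreal_measure by auto
    then show ?thesis using bd[OF A] c by (simp add: ennreal_mult[symmetric] ennreal_le_iff)
  qed
  then have "emeasure lborel (F \<inter> \<Union>T) \<le> ennreal c * emeasure lborel (\<Union>T)"
    by (intro sum_bound_family T F)
  moreover have "emeasure lborel (F \<inter> \<Union>T) = ennreal (measure lborel (F \<inter> \<Union>T))"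
    "emeasure lborel (\<Union>T) = ennreal (measure lborel (\<Union>T))"
    using fin[of "F \<inter> \<Union>T"] fin[of "\<Union>T"] B(1) emeasure_eq_ennreal_measure by auto
  ultimately show ?thesis using c by (simp add: ennreal_mult[symmetric] ennreal_le_iff)
qed

lemma sfam_elem':
  assumes "A \<in> sfam q s P"
  shows "\<exists>y m. A = dcube q s m y \<and> P A \<and> (\<forall>k<m. \<not> P (dcube q s k y))"
  using assms stopk_P stopk_min unfolding sfam_def by blast


lemma cz_null:
  fixes q :: "'a::euclidean_space"
  assumes s: "s > 0" and F[measurable]: "F \<in> sets lborel" and Fq: "F \<subseteq> hobox q s"
    and t: "0 < t" "t < 1"
    and A[measurable]: "A \<in> sets lborel"
    and notA: "\<And>w k. w \<in> F - A \<Longrightarrow> measure lborel (F \<inter> dcube q s k w) \<le> t * measure lborel (dcube q s k w)"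
  shows "measure lborel (F - A) = 0"
proof (rule ccontr)
  let ?G = "F - A"
  let ?g = "measure lborel ?G"
  assume "?g \<noteq> 0"
  then have g: "?g > 0" by (simp add: less_le)
  have G[measurable]: "?G \<in> sets lborel" by (rule sets.Diff[OF F A])
  have Gb: "?G \<in> sets borel" using G by simp
  have hfin: "hobox q s \<in> fmeasurable lborel" using s by (simp add: hobox_fmeas)
  have Gfin: "?G \<in> fmeasurable lborel"
    using Fq hfin G by (intro fmeasurableI2[OF hfin]) auto
  define e where "e = (1 - t) * ?g / 2"
  have e: "e > 0" using g t by (simp add: e_def)
  obtain U where U: "open U" "?G \<subseteq> U" "emeasure lborel (U - ?G) < ennreal e"
    using outer_regular_lborel[OF Gb e] by blast
  have Ub[measurable]: "U \<in> sets lborel" using U(1) by simp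
  have UGfin: "emeasure lborel (U - ?G) \<noteq> top" using U(3) by (auto simp: top_unique)
  have UG: "measure lborel (U - ?G) < e"
    using U(3) emeasure_eq_ennreal_measure[OF UGfin] e by (simp add: ennreal_less_iff)
  have Ufin: "U \<in> fmeasurable lborel"
  proof -
    have "emeasure lborel U \<le> emeasure lborel ?G + emeasure lborel (U - ?G)"
    proof -
      have "U = ?G \<union> (U - ?G)" using U(2) by auto
      then show ?thesis by (metis emeasure_subadditive G Ub sets.Diff)
    qed
    moreover have "emeasure lborel ?G < top" using Gfin by (simp add: fmeasurable_def)
    ultimately have "emeasure lborel U < top" using UGfin
      by (metis ennreal_add_eq_top linorder_not_le top.not_eq_extremum top_unique)
    then show ?thesis using Ub by (simp add: fmeasurable_def)
  qed
  have mU: "measure lborel U = ?g + measure lborel (U - ?G)"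
    using measurable_measure_Diff[OF Ufin G U(2)] by simp
  define P2 where "P2 = (\<lambda>P. P \<subseteq> U)"
  define T where "T = {P \<in> sfam q s P2. P \<inter> ?G \<noteq> {}}"
  have Tc: "countable T" unfolding T_def by (rule countable_subset[OF _ sfam_countable]) auto
  have Td: "disjoint T" unfolding T_def by (rule pairwise_subset[OF sfam_disjoint[OF s]]) auto
  have Ts: "T \<subseteq> sets lborel" unfolding T_def using sfam_sets[OF s] by auto
  have TU: "\<Union>T \<subseteq> U"
  proof
    fix w assume "w \<in> \<Union>T"
    then obtain P where P: "P \<in> sfam q s P2" "w \<in> P" unfolding T_def by auto
    have "P2 P" using P(1) by (rule sfam_elem)
    then show "w \<in> U" using P unfolding P2_def by auto
  qed
  have GT: "?G \<subseteq> \<Union>T"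
  proof
    fix y assume y: "y \<in> ?G"
    then have "y \<in> U" using U(2) by auto
    then obtain r where r: "r > 0" "ball y r \<subseteq> U" using U(1) open_contains_ball by blast
    have ds: "real DIM('a) * s > 0" using s by simp
    obtain k where k: "(1/2::real) ^ k < r / (real DIM('a) * s)"
      using real_arch_pow_inv[of "r / (real DIM('a) * s)" "1/2"] r ds by auto
    have "real DIM('a) * (s / 2^k) = (real DIM('a) * s) * (1/2)^k" by (simp add: power_one_over)
    also have "\<dots> < (real DIM('a) * s) * (r / (real DIM('a) * s))"
      using k ds by (intro mult_strict_left_mono) auto
    also have "\<dots> = r" using ds s by (simp add: field_simps)
    finally have kr: "real DIM('a) * (s / 2^k) < r" .
    have "dcube q s k y \<subseteq> ball y r"
    proof
      fix w assume "w \<in> dcube q s k y"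
      then have "norm (w - y) \<le> DIM('a) * (s / 2^k)" by (rule dcube_diam[OF s])
      then show "w \<in> ball y r" using kr by (simp add: dist_norm norm_minus_commute)
    qed
    then have "P2 (dcube q s k y)" using r unfolding P2_def by auto
    then have "y \<in> \<Union>(sfam q s P2)" unfolding sfam_Union by blast
    then obtain P where "P \<in> sfam q s P2" "y \<in> P" by auto
    then show "y \<in> \<Union>T" unfolding T_def using y by blast
  qed
  have bdT: "measure lborel (F \<inter> P) \<le> t * measure lborel P" if P: "P \<in> T" for P
  proof -
    obtain w where w: "w \<in> P" "w \<in> ?G" using P unfolding T_def by auto
    have "P \<in> sfam q s P2" using P unfolding T_def by auto
    then obtain y m where Pe: "P = dcube q s m y" by (rule sfam_elem)
    then have "P = dcube q s m w" using dcube_eq[of w q s m y] w by simp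
    then show ?thesis using notA[OF w(2)] by simp
  qed
  have "measure lborel (F \<inter> \<Union>T) \<le> t * measure lborel (\<Union>T)"
    by (rule sum_bound_family_real[OF Tc Td Ts F TU Ufin _ bdT]) (use t in auto)
  moreover have "?g \<le> measure lborel (F \<inter> \<Union>T)"
  proof -
    have "\<Union>T \<in> sets lborel" using Ts Tc by (intro sets.countable_Union) auto
    then have "F \<inter> \<Union>T \<in> fmeasurable lborel" using TU Ufin by (intro fmeasurableI2[OF Ufin]) auto
    then show ?thesis using GT G by (intro measure_mono_fmeasurable) auto
  qed
  moreover have "measure lborel (\<Union>T) \<le> measure lborel U"
    using TU Ufin Ts Tc by (intro measure_mono_fmeasurable sets.countable_Union) auto
  ultimately have "?g \<le> t * measure lborel U"
    using t by (smt (verit) mult_left_mono)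
  also have "\<dots> < t * (?g + e)" using mU UG t by simp
  finally have "?g < t * ?g + t * e" by (simp add: algebra_simps)
  moreover have "t * e \<le> (1 - t) * ?g / 2"
    using t g e_def by (simp add: mult_le_cancel_right1 mult.assoc)
  ultimately have "(1 - t) * ?g < (1 - t) * ?g / 2" by (simp add: algebra_simps)
  moreover have "(1 - t) * ?g > 0" using t g by simp
  ultimately show False by simp
qed

lemma cz:
  fixes q :: "'a::euclidean_space"
  assumes s: "s > 0" and F[measurable]: "F \<in> sets lborel" and Fq: "F \<subseteq> hobox q s"
    and t: "0 < t" "t < 1" and Fm: "measure lborel F \<le> t * s ^ DIM('a)"
  shows "\<exists>A \<in> sets lborel. A \<subseteq> hobox q s \<and> (\<forall>y\<in>A. ennreal t < hl_max (indicator F) y)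
           \<and> measure lborel F \<le> 2 ^ DIM('a) * t * measure lborel A"
proof -
  define Pr where "Pr = (\<lambda>P. t * measure lborel P < measure lborel (F \<inter> P))"
  define A where "A = \<Union>(sfam q s Pr)"
  have A_eq: "A = {y. \<exists>k. Pr (dcube q s k y)}" using sfam_Union A_def by simp
  have Ameas[measurable]: "A \<in> sets lborel"
    unfolding A_def using sfam_countable[of q s Pr] sfam_sets[OF s, of q Pr] by (intro sets.countable_Union) auto
  have H0: "dcube q s 0 q = hobox q s" by (rule dcube0[OF s])
  have hfin: "hobox q s \<in> fmeasurable lborel" using s by (simp add: hobox_fmeas)
  have mh: "measure lborel (hobox q s) = s ^ DIM('a)" using s by (simp add: measure_hobox)
  have notPr0: "\<not> Pr (dcube q s 0 y)" for y
  proof (cases "dcube q s 0 y \<inter> hobox q s = {}")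
    case True
    then have "F \<inter> dcube q s 0 y = {}" using Fq by auto
    moreover have "t * measure lborel (dcube q s 0 y) \<ge> 0" using t by simp
    ultimately show ?thesis unfolding Pr_def by simp
  next
    case False
    then obtain w where w: "w \<in> dcube q s 0 y" "w \<in> dcube q s 0 q" using H0 by auto
    then have "dcube q s 0 y = hobox q s" using dcube_disj[OF w] H0 by simp
    moreover have "F \<inter> hobox q s = F" using Fq by auto
    ultimately show ?thesis unfolding Pr_def using Fm mh by simp
  qed
  have A_sub: "A \<subseteq> hobox q s"
  proof
    fix y assume "y \<in> A"
    then obtain k where k: "Pr (dcube q s k y)" unfolding A_eq by auto
    have "F \<inter> dcube q s k y \<noteq> {}"
    proof
      assume "F \<inter> dcube q s k y = {}"
      moreover have "t * measure lborel (dcube q s k y) \<ge> 0" using t by simp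
      ultimately show False using k unfolding Pr_def by simp
    qed
    then obtain w where w: "w \<in> F" "w \<in> dcube q s k y" by auto
    have "w \<in> dcube q s 0 y" using w(2) dcube_mono[OF s, of 0 k q y] by auto
    moreover have "w \<in> dcube q s 0 q" using w(1) Fq H0 by auto
    ultimately have "dcube q s 0 y = hobox q s" using dcube_disj H0 by metis
    then show "y \<in> hobox q s" using dcube_self[of y q s 0] by simp
  qed
  have A_hl: "\<forall>y\<in>A. ennreal t < hl_max (indicator F) y"
  proof
    fix y assume "y \<in> A"
    then obtain k where k: "Pr (dcube q s k y)" unfolding A_eq by auto
    have pos: "measure lborel (dcube q s k y) > 0" using s by (simp add: measure_dcube)
    have "t < measure lborel (F \<inter> dcube q s k y) / measure lborel (dcube q s k y)"
      using k pos unfolding Pr_def by (simp add: field_simps)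
    then have "ennreal t < ennreal (measure lborel (F \<inter> dcube q s k y) / measure lborel (dcube q s k y))"
      using t by (simp add: ennreal_less_iff)
    also have "\<dots> \<le> hl_max (indicator F) y"
      by (rule hl_max_ge_dcube_real[OF s F dcube_self])
    finally show "ennreal t < hl_max (indicator F) y" .
  qed
  have A_mass: "measure lborel (F \<inter> A) \<le> 2 ^ DIM('a) * t * measure lborel A"
    unfolding A_def
  proof (rule sum_bound_family_real[OF sfam_countable sfam_disjoint[OF s] sfam_sets[OF s] F _ hfin])
    show "\<Union>(sfam q s Pr) \<subseteq> hobox q s" using A_sub A_def by simp
    show "0 \<le> 2 ^ DIM('a) * t" using t by simp
  next
    fix P assume P: "P \<in> sfam q s Pr"
    then obtain y m where Pe: "P = dcube q s m y" "Pr P" "\<And>k. k < m \<Longrightarrow> \<not> Pr (dcube q s k y)"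
      using sfam_elem' by blast
    have "m \<noteq> 0"
    proof
      assume "m = 0"
      then show False using Pe(1,2) notPr0[of y] by simp
    qed
    then obtain m' where m': "m = Suc m'" by (cases m) auto
    have np: "\<not> Pr (dcube q s m' y)" using Pe(3) m' by simp
    have "measure lborel (F \<inter> P) \<le> measure lborel (F \<inter> dcube q s m' y)"
    proof (rule measure_mono_fmeasurable)
      show "F \<inter> P \<subseteq> F \<inter> dcube q s m' y" using Pe(1) m' dcube_mono[OF s, of m' "Suc m'" q y] by auto
      show "F \<inter> P \<in> sets lborel" using Pe(1) s by simp
      have Fb: "F \<in> sets borel" using F by simp
      show "F \<inter> dcube q s m' y \<in> fmeasurable lborel"
        using Fb dcube_borel'[OF s, of q m' y] by (intro fmeasurableI2[OF dcube_fmeas[OF s, of q m' y]]) auto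
    qed
    also have "\<dots> \<le> t * measure lborel (dcube q s m' y)" using np unfolding Pr_def by simp
    also have "\<dots> = 2 ^ DIM('a) * t * measure lborel P"
      using Pe(1) m' measure_dcube_Suc[OF s, of q m' y] by simp
    finally show "measure lborel (F \<inter> P) \<le> 2 ^ DIM('a) * t * measure lborel P" .
  qed
  have notA: "measure lborel (F \<inter> dcube q s k w) \<le> t * measure lborel (dcube q s k w)" if "w \<in> F - A" for w k
    using that unfolding A_eq Pr_def by (auto simp: not_less)
  have null: "measure lborel (F - A) = 0"
    by (rule cz_null[OF s F Fq t Ameas notA])
  have "measure lborel F \<le> measure lborel (F \<inter> A) + measure lborel (F - A)"
  proof -
    have "F = (F \<inter> A) \<union> (F - A)" by auto
    then show ?thesis using measure_Un_le[of "F \<inter> A" lborel "F - A"] Ameas F by (metis sets.Diff sets.Int)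
  qed
  then have "measure lborel F \<le> 2 ^ DIM('a) * t * measure lborel A" using A_mass null by simp
  then show ?thesis using Ameas A_sub A_hl by blast
qed


lemma hl_max_mono:
  assumes "\<And>y. f y \<le> g y"
  shows "hl_max f x \<le> hl_max g x"
  unfolding hl_max_def
proof (rule SUP_mono)
  fix Q assume "Q \<in> {Q \<in> cubes. x \<in> Q}"
  have "(\<integral>\<^sup>+ y. f y * indicator Q y \<partial>lborel) \<le> (\<integral>\<^sup>+ y. g y * indicator Q y \<partial>lborel)"
    using assms by (intro nn_integral_mono mult_right_mono) auto
  then show "\<exists>Q'\<in>{Q \<in> cubes. x \<in> Q}. (\<integral>\<^sup>+ y. f y * indicator Q y \<partial>lborel) / emeasure lborel Q
      \<le> (\<integral>\<^sup>+ y. g y * indicator Q' y \<partial>lborel) / emeasure lborel Q'"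
    using \<open>Q \<in> _\<close> by (intro bexI[of _ Q] divide_right_mono_ennreal) auto
qed

lemma hl_max_ge_int:
  fixes c :: "'a::euclidean_space"
  assumes h: "h > 0" and x: "x \<in> cbox c (c + h *\<^sub>R One)" and V: "V \<ge> 0"
    and I: "ennreal V \<le> (\<integral>\<^sup>+ z. f z * indicator (cbox c (c + h *\<^sub>R One)) z \<partial>lborel)"
  shows "ennreal (V / h ^ DIM('a)) \<le> hl_max f x"
proof -
  let ?Q = "cbox c (c + h *\<^sub>R One)"
  have "ennreal (V / h ^ DIM('a)) = ennreal V / ennreal (h ^ DIM('a))"
    using h V by (simp add: divide_ennreal)
  also have "\<dots> \<le> (\<integral>\<^sup>+ z. f z * indicator ?Q z \<partial>lborel) / emeasure lborel ?Q"
    using I emeasure_hobox(2)[of h c] h by (simp add: divide_right_mono_ennreal)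
  also have "\<dots> \<le> hl_max f x"
    by (rule hl_max_ge_cube[OF cbox_in_cubes[OF h] x])
  finally show ?thesis .
qed

lemma hl_max_ge_cbox_real:
  fixes c :: "'a::euclidean_space"
  assumes h: "h > 0" and y: "y \<in> cbox c (c + h *\<^sub>R One)" and E[measurable]: "E \<in> sets borel"
  shows "ennreal (measure lborel (E \<inter> cbox c (c + h *\<^sub>R One)) / h ^ DIM('a)) \<le> hl_max (indicator E) y"
proof -
  let ?Q = "cbox c (c + h *\<^sub>R One)"
  have fin: "emeasure lborel (E \<inter> ?Q) \<noteq> top"
  proof -
    have "emeasure lborel (E \<inter> ?Q) \<le> emeasure lborel ?Q" by (intro emeasure_mono) auto
    then show ?thesis using h by (auto simp: emeasure_hobox top_unique)
  qed
  have "(\<integral>\<^sup>+ z. indicator E z * indicator ?Q z \<partial>lborel) = ennreal (measure lborel (E \<inter> ?Q))"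
    using nn_integral_ind_ind[of E ?Q] emeasure_eq_ennreal_measure[OF fin] by simp
  then show ?thesis
    by (intro hl_max_ge_int[OF h y]) auto
qed

lemma geom_half:
  "m \<le> n + 1 \<Longrightarrow> (\<Sum>k\<in>{m..n}. (1/2::real) ^ (k + 1)) = (1/2) ^ m - (1/2) ^ (n + 1)"
proof (induction n)
  case 0
  then show ?case by (cases m) auto
next
  case (Suc n)
  show ?case
  proof (cases "m \<le> n + 1")
    case True
    have "{m..Suc n} = insert (Suc n) {m..n}" using True by auto
    then have "(\<Sum>k\<in>{m..Suc n}. (1/2::real) ^ (k + 1)) = (1/2) ^ (Suc n + 1) + (\<Sum>k\<in>{m..n}. (1/2::real) ^ (k + 1))"
      by simp
    also have "\<dots> = (1/2) ^ m - (1/2) ^ (Suc n + 1)" using Suc.IH[OF True] by simp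
    finally show ?thesis .
  next
    case False
    then have "m = Suc n + 1" using Suc.prems by simp
    then show ?thesis by simp
  qed
qed

lemma cbox_side_mono:
  fixes q :: "'a::euclidean_space"
  assumes "0 \<le> u" "u \<le> v"
  shows "cbox q (q + u *\<^sub>R One) \<subseteq> cbox q (q + v *\<^sub>R One)"
  using assms by (fastforce simp: mem_box inner_add_left One_inner_Basis)

lemma hobox_sub_cbox_side:
  fixes q :: "'a::euclidean_space"
  assumes "0 \<le> s" "s \<le> v"
  shows "hobox q s \<subseteq> cbox q (q + v *\<^sub>R One)"
  using hobox_sub_cbox[of q s] cbox_side_mono[OF assms, of q] by blast

lemma pow2_ge: "1 \<le> (2::real) ^ n"
  by simp

lemma measure_cbox_side:
  fixes q :: "'a::euclidean_space"
  shows "h \<ge> 0 \<Longrightarrow> measure lborel (cbox q (q + h *\<^sub>R One)) = h ^ DIM('a)"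
  by (simp add: measure_def emeasure_hobox(2))

lemma level_set:
  fixes q :: "'a::euclidean_space"
  assumes s: "s > 0" and E[measurable]: "E \<in> sets borel" and Fdef: "F = E \<inter> hobox q s"
    and l: "0 < l" "l < t" "t < 1"
    and J: "measure lborel F \<le> (2^J)^DIM('a) * l * s^DIM('a)"
  shows "\<exists>A\<in>sets lborel. A \<subseteq> cbox q (q + (2^J * s) *\<^sub>R One) \<and> (\<forall>y\<in>A. ennreal t < hl_max (indicator E) y)
           \<and> measure lborel F / (2^DIM('a) * t) \<le> measure lborel A"
proof -
  let ?D = "DIM('a)"
  let ?\<phi> = "measure lborel F"
  have F[measurable]: "F \<in> sets lborel" using Fdef by simp
  have Fb: "F \<in> sets borel" using Fdef by simp
  have Fq: "F \<subseteq> hobox q s" using Fdef by auto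
  have t: "0 < t" using l by simp
  have sD: "s ^ ?D > 0" using s by simp
  have sJ: "s \<le> 2^J * s" using s by simp
  show ?thesis
  proof (cases "?\<phi> \<le> t * s ^ ?D")
    case True
    obtain A where A: "A \<in> sets lborel" "A \<subseteq> hobox q s" "\<forall>y\<in>A. ennreal t < hl_max (indicator F) y"
        "?\<phi> \<le> 2 ^ ?D * t * measure lborel A"
      using cz[OF s F Fq t l(3) True] by blast
    have "A \<subseteq> cbox q (q + (2^J * s) *\<^sub>R One)"
      using A(2) hobox_sub_cbox_side[of s "2^J * s" q] s sJ by auto
    moreover have "\<forall>y\<in>A. ennreal t < hl_max (indicator E) y"
    proof
      fix y assume "y \<in> A"
      then have "ennreal t < hl_max (indicator F) y" using A(3) by auto
      also have "\<dots> \<le> hl_max (indicator E) y"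
        using Fdef by (intro hl_max_mono) (auto split: split_indicator)
      finally show "ennreal t < hl_max (indicator E) y" .
    qed
    moreover have "?\<phi> / (2 ^ ?D * t) \<le> measure lborel A"
      using A(4) t by (simp add: divide_le_eq mult.commute mult.left_commute)
    ultimately show ?thesis using A(1) by blast
  next
    case False
    then have less: "t * s ^ ?D < ?\<phi>" by simp
    have ex: "\<exists>j. ?\<phi> \<le> (2^(j+1))^?D * t * s^?D"
    proof -
      obtain n where n: "?\<phi> / (t * s^?D) < 2 ^ n" using real_arch_pow[of 2] by auto
      have "(2::real) ^ n \<le> 2 ^ (n + 1)" by (intro power_increasing) auto
      also have "(2::real) ^ (n + 1) \<le> (2 ^ (n + 1)) ^ ?D"
      proof -
        have "(2::real) ^ (n + 1) = (2 ^ (n + 1)) ^ 1" by simp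
        also have "\<dots> \<le> (2 ^ (n + 1)) ^ ?D"
          using pow2_ge[of "n+1"] by (intro power_increasing) (auto simp: DIM_positive)
        finally show ?thesis .
      qed
      finally have "?\<phi> / (t * s^?D) \<le> (2 ^ (n + 1)) ^ ?D" using n by simp
      then have "?\<phi> \<le> (2 ^ (n + 1)) ^ ?D * (t * s^?D)" using t sD by (simp add: divide_le_eq)
      then show ?thesis by (auto simp: mult.assoc)
    qed
    define Pj where "Pj = (\<lambda>j. ?\<phi> \<le> (2^(j+1))^?D * t * s^?D)"
    define j where "j = Least Pj"
    have hj: "?\<phi> \<le> (2^(j+1))^?D * t * s^?D"
      using LeastI_ex[of Pj] ex unfolding j_def Pj_def by blast
    have nj: "(2^j)^?D * t * s^?D < ?\<phi>"
    proof (cases j)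
      case 0
      then show ?thesis using less by simp
    next
      case (Suc j')
      then have "j' < Least Pj" using j_def by simp
      then have "\<not> Pj j'" by (rule not_less_Least)
      then show ?thesis using Suc unfolding Pj_def by simp
    qed
    define A where "A = cbox q (q + (2^j * s) *\<^sub>R One)"
    have Ab: "A \<in> sets lborel" unfolding A_def by simp
    have mA: "measure lborel A = (2^j)^?D * s^?D"
      unfolding A_def using s by (simp add: measure_cbox_side power_mult_distrib)
    have jJ: "j < J"
    proof (rule ccontr)
      assume "\<not> j < J"
      then have "(2::real)^J \<le> 2^j" by (intro power_increasing) auto
      then have "((2::real)^J)^?D \<le> (2^j)^?D" by (intro power_mono) auto
      then have "(2^J)^?D * l * s^?D \<le> (2^j)^?D * l * s^?D"
        using l sD by (intro mult_right_mono) auto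
      also have "\<dots> \<le> (2^j)^?D * t * s^?D"
        using l sD by (intro mult_right_mono mult_left_mono) auto
      finally show False using J nj by simp
    qed
    have "A \<subseteq> cbox q (q + (2^J * s) *\<^sub>R One)"
      unfolding A_def using s jJ by (intro cbox_side_mono) auto
    moreover have "\<forall>y\<in>A. ennreal t < hl_max (indicator E) y"
    proof
      fix y assume y: "y \<in> A"
      have FA: "F \<subseteq> E \<inter> A"
        using Fdef hobox_sub_cbox_side[of s "2^j * s" q] s unfolding A_def by auto
      have "?\<phi> \<le> measure lborel (E \<inter> A)"
        using FA F by (intro measure_mono_fmeasurable) (auto simp: A_def intro!: fmeasurableI2[of "cbox _ _"])
      then have "?\<phi> / (2^j * s) ^ ?D \<le> measure lborel (E \<inter> A) / (2^j * s) ^ ?D"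
        using s by (intro divide_right_mono) auto
      moreover have "t < ?\<phi> / (2^j * s) ^ ?D"
        using nj s by (simp add: power_mult_distrib field_simps)
      ultimately have "ennreal t < ennreal (measure lborel (E \<inter> A) / (2^j * s) ^ ?D)"
        using t by (simp add: ennreal_less_iff)
      also have "\<dots> \<le> hl_max (indicator E) y"
        using hl_max_ge_cbox_real[of "2^j * s" y q E] s y E unfolding A_def by simp
      finally show "ennreal t < hl_max (indicator E) y" .
    qed
    moreover have "?\<phi> / (2^?D * t) \<le> measure lborel A"
    proof -
      have "(2::real)^(j+1) = 2 * 2^j" by simp
      then have "?\<phi> \<le> 2^?D * t * ((2^j)^?D * s^?D)" using hj by (simp add: power_mult_distrib mult_ac)
      then show ?thesis unfolding mA using t by (simp add: divide_le_eq mult_ac)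
    qed
    ultimately show ?thesis using Ab by blast
  qed
qed

lemma lb2:
  fixes q :: "'a::euclidean_space"
  assumes s: "s > 0" and E[measurable]: "E \<in> sets borel" and Fdef: "F = E \<inter> hobox q s"
    and l: "0 < l" "l \<le> 1/4" and x: "x \<in> cbox q (q + s *\<^sub>R One)"
    and Fm: "l * s ^ DIM('a) < measure lborel F"
  shows "\<exists>N::nat. - ln l \<le> 2 * real N \<and> ennreal (real N * l / 2 ^ (2 * DIM('a) + 1))
           \<le> hl_max (\<lambda>y. indicator {z. ennreal l < hl_max (indicator E) z} y * hl_max (indicator E) y) x"
proof -
  let ?D = "DIM('a)"
  let ?\<phi> = "measure lborel F"
  let ?g = "\<lambda>y. indicator {z. ennreal l < hl_max (indicator E) z} y * hl_max (indicator E) y :: ennreal"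
  have sD: "s ^ ?D > 0" using s by simp
  have phi_pos: "?\<phi> > 0" using Fm l sD by (smt (verit) mult_pos_pos)
  define PN where "PN = (\<lambda>n::nat. (1/2::real) ^ (n + 1) \<le> l)"
  have exN: "\<exists>n. PN n"
  proof -
    obtain n where "(1/2::real) ^ n < l" using real_arch_pow_inv[of l "1/2"] l by auto
    moreover have "(1/2::real) ^ (n + 1) \<le> (1/2) ^ n" by (intro power_decreasing) auto
    ultimately have "(1/2::real)^(n+1) \<le> l" by linarith
    then show ?thesis unfolding PN_def by blast
  qed
  define N where "N = Least PN"
  have PNN: "PN N" unfolding N_def by (rule LeastI_ex[OF exN])
  have N1: "N \<ge> 1"
  proof (rule ccontr)
    assume "\<not> N \<ge> 1"
    then have "N = 0" by simp
    then show False using PNN l unfolding PN_def by simp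
  qed
  have lk: "l < (1/2) ^ k" if k: "k \<in> {1..N}" for k
  proof -
    have "k - 1 < Least PN" using k N_def by auto
    then have "\<not> PN (k - 1)" by (rule not_less_Least)
    moreover have "k - 1 + 1 = k" using k by simp
    ultimately show ?thesis unfolding PN_def by (metis not_le)
  qed
  have lnN: "- ln l \<le> 2 * real N"
  proof -
    have "ln ((1/2::real) ^ (N + 1)) \<le> ln l" using PNN l unfolding PN_def by (subst ln_le_cancel_iff) auto
    then have a: "- ((1 + real N) * ln 2) \<le> ln l" by (simp add: ln_realpow ln_div algebra_simps)
    have b0: "(1 + real N) * ln 2 \<le> (1 + real N) * 1"
      using ln_2_less_1 by (intro mult_left_mono) auto
    then have b: "(1 + real N) * ln 2 \<le> 1 + real N" by simp
    have c: "real N \<ge> 1" using N1 by simp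
    from a b c show ?thesis by linarith
  qed
  define PJ where "PJ = (\<lambda>j::nat. ?\<phi> \<le> (2^j)^?D * l * s^?D)"
  have exJ: "\<exists>j. PJ j"
  proof -
    obtain n where n: "?\<phi> / (l * s^?D) < 2 ^ n" using real_arch_pow[of 2] by auto
    have "(2::real) ^ n = (2 ^ n) ^ 1" by simp
    also have "\<dots> \<le> (2 ^ n) ^ ?D"
      using pow2_ge[of n] by (intro power_increasing) (auto simp: DIM_positive)
    finally have "?\<phi> / (l * s^?D) \<le> (2 ^ n) ^ ?D" using n by simp
    then have "?\<phi> \<le> (2 ^ n) ^ ?D * (l * s^?D)" using l sD by (simp add: divide_le_eq)
    then show ?thesis unfolding PJ_def by (auto simp: mult.assoc)
  qed
  define J where "J = Least PJ"
  have PJJ: "PJ J" unfolding J_def by (rule LeastI_ex[OF exJ])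
  have J1: "J \<ge> 1"
  proof (rule ccontr)
    assume "\<not> J \<ge> 1"
    then have "J = 0" by simp
    then show False using PJJ Fm unfolding PJ_def by simp
  qed
  have RJ: "(2^J)^?D * s^?D * l < 2^?D * ?\<phi>"
  proof -
    have "J - 1 < Least PJ" using J1 J_def by simp
    then have "\<not> PJ (J - 1)" by (rule not_less_Least)
    then have a: "(2^(J-1))^?D * l * s^?D < ?\<phi>" unfolding PJ_def by simp
    have "(2::real)^J = 2 * 2^(J-1)" using J1 by (cases J) auto
    then have "(2^J)^?D * s^?D * l = 2^?D * ((2^(J-1))^?D * l * s^?D)"
      by (simp add: power_mult_distrib mult_ac)
    also have "\<dots> < 2^?D * ?\<phi>" using a by simp
    finally show ?thesis .
  qed
  define R where "R = cbox q (q + (2^J * s) *\<^sub>R One)"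
  have xR: "x \<in> R" using x cbox_side_mono[of s "2^J * s" q] s unfolding R_def by auto
  have Rfin: "R \<in> fmeasurable lborel" unfolding R_def by simp
  have "\<forall>k\<in>{1..N}. \<exists>A. A \<in> sets lborel \<and> A \<subseteq> R \<and> (\<forall>y\<in>A. ennreal ((1/2)^k) < hl_max (indicator E) y)
           \<and> ?\<phi> / (2^?D * (1/2)^k) \<le> measure lborel A"
  proof
    fix k assume k: "k \<in> {1..N}"
    have "(1/2::real)^k \<le> (1/2)^1" using k by (intro power_decreasing) auto
    then have t1: "(1/2::real)^k < 1" by simp
    show "\<exists>A. A \<in> sets lborel \<and> A \<subseteq> R \<and> (\<forall>y\<in>A. ennreal ((1/2)^k) < hl_max (indicator E) y)
           \<and> ?\<phi> / (2^?D * (1/2)^k) \<le> measure lborel A"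
      using level_set[OF s E Fdef l(1) lk[OF k] t1, of J] PJJ unfolding PJ_def R_def by blast
  qed
  then obtain A where A: "\<And>k. k \<in> {1..N} \<Longrightarrow> A k \<in> sets lborel \<and> A k \<subseteq> R \<and>
      (\<forall>y\<in>A k. ennreal ((1/2)^k) < hl_max (indicator E) y) \<and> ?\<phi> / (2^?D * (1/2)^k) \<le> measure lborel (A k)"
    using bchoice[of "{1..N}"] by metis
  define Hn where "Hn = (\<lambda>y. \<Sum>k\<in>{1..N}. ennreal ((1/2)^(k+1)) * indicator (A k) y)"
  have pw: "Hn y \<le> ?g y * indicator R y" for y
  proof (cases "\<exists>k\<in>{1..N}. y \<in> A k")
    case False
    then have "Hn y = 0" unfolding Hn_def by (auto intro!: sum.neutral)
    then show ?thesis by simp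
  next
    case True
    define Ky where "Ky = {k\<in>{1..N}. y \<in> A k}"
    have Kyf: "finite Ky" "Ky \<noteq> {}" using True unfolding Ky_def by auto
    define m where "m = Min Ky"
    have m: "m \<in> Ky" unfolding m_def using Kyf by (rule Min_in)
    have mle: "\<And>k. k \<in> Ky \<Longrightarrow> m \<le> k" unfolding m_def using Kyf by simp
    have m1: "m \<in> {1..N}" "y \<in> A m" using m unfolding Ky_def by auto
    have yR: "y \<in> R" using A[OF m1(1)] m1(2) by auto
    have hm: "ennreal ((1/2)^m) < hl_max (indicator E) y" using A[OF m1(1)] m1(2) by auto
    have "ennreal l < ennreal ((1/2)^m)" using lk[OF m1(1)] l by (simp add: ennreal_less_iff)
    then have yO: "ennreal l < hl_max (indicator E) y" using hm by simp
    have "Hn y = (\<Sum>k\<in>Ky. ennreal ((1/2)^(k+1)))"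
      unfolding Hn_def Ky_def by (rule sum.mono_neutral_cong_right) (auto split: split_indicator)
    also have "\<dots> \<le> (\<Sum>k\<in>{m..N}. ennreal ((1/2)^(k+1)))"
      using mle by (intro sum_mono2) (auto simp: Ky_def)
    also have "\<dots> = ennreal (\<Sum>k\<in>{m..N}. (1/2)^(k+1))" by (rule sum_ennreal) simp
    also have "\<dots> = ennreal ((1/2)^m - (1/2)^(N+1))"
      using m1(1) by (subst geom_half) auto
    also have "\<dots> \<le> ennreal ((1/2)^m)" by (intro ennreal_leI) simp
    also have "\<dots> \<le> hl_max (indicator E) y" using hm by simp
    also have "\<dots> = ?g y * indicator R y" using yO yR by simp
    finally show ?thesis .
  qed
  have Ameas: "\<And>k. k \<in> {1..N} \<Longrightarrow> A k \<in> sets borel" using A by simp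
  have "(\<integral>\<^sup>+ y. Hn y \<partial>lborel) = (\<Sum>k\<in>{1..N}. ennreal ((1/2)^(k+1)) * emeasure lborel (A k))"
    unfolding Hn_def using Ameas by (subst nn_integral_sum) (auto simp: nn_integral_cmult_indicator)
  also have "\<dots> \<ge> (\<Sum>k\<in>{1..N}. ennreal (?\<phi> / 2^(?D+1)))"
  proof (intro sum_mono)
    fix k assume k: "k \<in> {1..N}"
    have Ak: "A k \<in> sets lborel" "A k \<subseteq> R" "?\<phi> / (2^?D * (1/2)^k) \<le> measure lborel (A k)" using A[OF k] by auto
    have "emeasure lborel (A k) \<le> emeasure lborel R" using Ak Rfin by (intro emeasure_mono) (auto simp: fmeasurable_def)
    then have fin: "emeasure lborel (A k) \<noteq> top" using Rfin by (auto simp: fmeasurable_def top_unique)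
    have "?\<phi> / 2^(?D+1) = (1/2)^(k+1) * (?\<phi> / (2^?D * (1/2)^k))"
      by (simp add: field_simps power_add)
    also have "\<dots> \<le> (1/2)^(k+1) * measure lborel (A k)"
      using Ak(3) by (intro mult_left_mono) auto
    finally have "ennreal (?\<phi> / 2^(?D+1)) \<le> ennreal ((1/2)^(k+1)) * ennreal (measure lborel (A k))"
      by (simp add: ennreal_mult[symmetric] ennreal_leI)
    then show "ennreal (?\<phi> / 2^(?D+1)) \<le> ennreal ((1/2)^(k+1)) * emeasure lborel (A k)"
      using emeasure_eq_ennreal_measure[OF fin] by simp
  qed
  finally have intH0: "(\<Sum>k\<in>{1..N}. ennreal (?\<phi> / 2^(?D+1))) \<le> (\<integral>\<^sup>+ y. Hn y \<partial>lborel)" .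
  define c where "c = ?\<phi> / 2^(?D+1)"
  have c0: "c \<ge> 0" using phi_pos unfolding c_def by simp
  have "(\<Sum>k\<in>{1..N}. ennreal c) = of_nat N * ennreal c" by simp
  also have "\<dots> = ennreal (real N) * ennreal c" by (simp add: ennreal_of_nat_eq_real_of_nat)
  also have "\<dots> = ennreal (real N * c)" using c0 by (simp add: ennreal_mult)
  finally have intH: "ennreal (real N * (?\<phi> / 2^(?D+1))) \<le> (\<integral>\<^sup>+ y. Hn y \<partial>lborel)"
    using intH0 unfolding c_def by simp
  also have "\<dots> \<le> (\<integral>\<^sup>+ y. ?g y * indicator R y \<partial>lborel)"
    by (intro nn_integral_mono pw)
  finally have I: "ennreal (real N * (?\<phi> / 2^(?D+1))) \<le> (\<integral>\<^sup>+ y. ?g y * indicator R y \<partial>lborel)" .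
  have h1: "ennreal (real N * (?\<phi> / 2^(?D+1)) / (2^J * s) ^ ?D) \<le> hl_max ?g x"
    using hl_max_ge_int[of "2^J * s" x q "real N * (?\<phi> / 2^(?D+1))" ?g] s xR I phi_pos unfolding R_def by simp
  have "real N * l / 2 ^ (2 * ?D + 1) \<le> real N * (?\<phi> / 2^(?D+1)) / (2^J * s) ^ ?D"
  proof -
    have pJ: "(2^J * s) ^ ?D > 0" using s by simp
    have "real N * l * (2^J * s) ^ ?D = real N * ((2^J)^?D * s^?D * l)" by (simp add: power_mult_distrib mult_ac)
    also have "\<dots> \<le> real N * (2^?D * ?\<phi>)" using RJ by (intro mult_left_mono) auto
    finally have "real N * l * (2^J * s) ^ ?D \<le> real N * (2^?D * ?\<phi>)" .
    then have num: "real N * l * (2^J * s) ^ ?D \<le> real N * 2^?D * ?\<phi>" by (simp add: mult_ac)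
    have X: "(2::real)^(2 * ?D + 1) = 2^(?D+1) * 2^?D"
    proof -
      have "2 * ?D + 1 = (?D + 1) + ?D" by simp
      then show ?thesis by (simp only: power_add)
    qed
    have L: "real N * l / 2 ^ (2 * ?D + 1) = (real N * l * (2^J * s) ^ ?D) / (2^(?D+1) * 2^?D * (2^J * s) ^ ?D)"
      unfolding X using pJ s by simp
    have Rr: "real N * (?\<phi> / 2^(?D+1)) / (2^J * s) ^ ?D = (real N * 2^?D * ?\<phi>) / (2^(?D+1) * 2^?D * (2^J * s) ^ ?D)"
      using pJ s by (simp add: field_simps)
    show ?thesis unfolding L Rr using pJ num by (intro divide_right_mono) auto
  qed
  then have "ennreal (real N * l / 2 ^ (2 * ?D + 1)) \<le> hl_max ?g x"
    using h1 by (meson ennreal_leI order_trans)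
  then show ?thesis using lnN by blast
qed

lemma key:
  fixes E :: "'a::euclidean_space set" and x :: 'a
  assumes E[measurable]: "E \<in> sets borel" and l: "0 < l" "l < 1"
    and x: "ennreal l < hl_max (indicator E) x"
  shows "ennreal (l * (1 - ln l) / 2 ^ (2 * DIM('a) + 3))
    \<le> hl_max (\<lambda>y. indicator {z. ennreal l < hl_max (indicator E) z} y * hl_max (indicator E) y) x"
proof -
  let ?D = "DIM('a)"
  let ?g = "\<lambda>y. indicator {z. ennreal l < hl_max (indicator E) z} y * hl_max (indicator E) y :: ennreal"
  obtain Q where Q: "Q \<in> cubes" "x \<in> Q"
    and lQ: "ennreal l < (\<integral>\<^sup>+ z. indicator E z * indicator Q z \<partial>lborel) / emeasure lborel Q"
    using x unfolding hl_max_def less_SUP_iff by blast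
  obtain q s where s: "s > 0" and Qe: "Q = cbox q (q + s *\<^sub>R One)"
    using Q(1) unfolding cubes_def by blast
  have Qb[measurable]: "Q \<in> sets borel" unfolding Qe by simp
  have Qfin: "Q \<in> fmeasurable lborel" unfolding Qe by simp
  have sD: "s ^ ?D > 0" using s by simp
  define m where "m = measure lborel (E \<inter> Q)"
  have m0: "m \<ge> 0" unfolding m_def by simp
  have finEQ: "emeasure lborel (E \<inter> Q) \<noteq> top"
  proof -
    have "emeasure lborel (E \<inter> Q) \<le> emeasure lborel Q" by (intro emeasure_mono) auto
    then show ?thesis using Qfin by (auto simp: fmeasurable_def top_unique)
  qed
  have intEQ: "(\<integral>\<^sup>+ z. indicator E z * indicator Q z \<partial>lborel) = ennreal m"
    using nn_integral_ind_ind[of E Q] emeasure_eq_ennreal_measure[OF finEQ] unfolding m_def by simp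
  have emQ: "emeasure lborel Q = ennreal (s ^ ?D)" unfolding Qe using s by (simp add: emeasure_hobox(2))
  have "ennreal l < ennreal (m / s ^ ?D)"
    using lQ unfolding intEQ emQ using m0 sD by (simp add: divide_ennreal)
  then have lm: "l < m / s ^ ?D" using l by (simp add: ennreal_less_iff)
  have LB1: "ennreal (m / s ^ ?D) \<le> hl_max ?g x"
  proof -
    have pw: "ennreal (m / s ^ ?D) * indicator Q y \<le> ?g y * indicator Q y" for y
    proof (cases "y \<in> Q")
      case True
      have "ennreal (m / s ^ ?D) \<le> hl_max (indicator E) y"
        using hl_max_ge_cbox_real[OF s, of y q E] True E unfolding Qe m_def by simp
      moreover have "ennreal l < ennreal (m / s ^ ?D)" using lm l by (simp add: ennreal_less_iff)
      ultimately show ?thesis using True by auto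
    qed simp
    have "ennreal m = ennreal (m / s ^ ?D) * emeasure lborel Q"
      unfolding emQ using sD m0 s by (simp add: ennreal_mult[symmetric])
    also have "\<dots> = (\<integral>\<^sup>+ y. ennreal (m / s ^ ?D) * indicator Q y \<partial>lborel)"
      by (simp add: nn_integral_cmult_indicator)
    also have "\<dots> \<le> (\<integral>\<^sup>+ y. ?g y * indicator Q y \<partial>lborel)"
      by (intro nn_integral_mono pw)
    finally have "ennreal m \<le> (\<integral>\<^sup>+ y. ?g y * indicator Q y \<partial>lborel)" .
    then show ?thesis
      using hl_max_ge_int[OF s, of x q m ?g] Q(2) m0 unfolding Qe by simp
  qed
  have LB1': "ennreal l \<le> hl_max ?g x"
    using LB1 lm by (meson ennreal_leI less_imp_le order_trans)
  define F where "F = E \<inter> hobox q s"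
  have phim: "m \<le> measure lborel F"
  proof -
    let ?B = "box q (q + s *\<^sub>R One)"
    have Bsub: "?B \<subseteq> Q" unfolding Qe by (rule box_subset_cbox)
    have mB: "measure lborel (Q - ?B) = 0"
    proof -
      have "measure lborel (Q - ?B) = measure lborel Q - measure lborel ?B"
        by (rule measurable_measure_Diff[OF Qfin _ Bsub]) simp
      moreover have "measure lborel Q = measure lborel ?B"
        unfolding Qe using emeasure_hobox(2)[of s q] s
        by (simp add: measure_def inner_add_left One_inner_Basis prod_constant)
      ultimately show ?thesis by simp
    qed
    have sub: "E \<inter> Q \<subseteq> F \<union> (Q - ?B)"
      using box_sub_hobox[of q s] unfolding F_def Qe by auto
    have Fb: "F \<in> sets borel" unfolding F_def by simp
    have "F \<union> (Q - ?B) \<in> fmeasurable lborel"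
      using Fb hobox_sub_cbox[of q s] unfolding F_def Qe
      by (intro fmeasurableI2[OF Qfin]) (auto simp: Qe)
    then have "m \<le> measure lborel (F \<union> (Q - ?B))"
      unfolding m_def using sub by (intro measure_mono_fmeasurable) auto
    also have "\<dots> \<le> measure lborel F + measure lborel (Q - ?B)"
      using Fb by (intro measure_Un_le) auto
    finally show ?thesis using mB by simp
  qed
  have Fm: "l * s ^ ?D < measure lborel F"
    using lm phim sD by (simp add: field_simps)
  have xQ: "x \<in> cbox q (q + s *\<^sub>R One)" using Q(2) Qe by simp
  define B1 where "B1 = (2::real) ^ (2 * ?D + 1)"
  have B1: "B1 \<ge> 2" unfolding B1_def
  proof -
    have "(2::real) ^ 1 \<le> 2 ^ (2 * ?D + 1)" by (intro power_increasing) auto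
    then show "2 \<le> (2::real) ^ (2 * ?D + 1)" by simp
  qed
  have C: "(2::real) ^ (2 * ?D + 3) = 4 * B1"
  proof -
    have "2 * ?D + 3 = 2 + (2 * ?D + 1)" by simp
    then show ?thesis unfolding B1_def by (simp only: power_add) simp
  qed
  show ?thesis
  proof (cases "l \<le> 1/4")
    case True
    obtain N :: nat where N: "- ln l \<le> 2 * real N" and LB2: "ennreal (real N * l / 2 ^ (2 * ?D + 1)) \<le> hl_max ?g x"
      using lb2[OF s E F_def l(1) True xQ Fm] by blast
    have "l * (1 - ln l) = l + l * (- ln l)" by (simp add: algebra_simps)
    also have "\<dots> \<le> l + l * (2 * real N)" using N l by (intro add_left_mono mult_left_mono) auto
    finally have a: "l * (1 - ln l) \<le> l + l * (2 * real N)" .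
    have b: "l * (1 - ln l) / 2 ^ (2 * ?D + 3) \<le> (l + l * (2 * real N)) / (4 * B1)"
      unfolding C using a B1 by (intro divide_right_mono) auto
    have c: "(l + l * (2 * real N)) / (4 * B1) = l / (4 * B1) + (real N * l / B1) / 2"
      using B1 by (simp add: field_simps)
    have d: "l / (4 * B1) \<le> l / 2" using B1 l by (intro divide_left_mono) auto
    show ?thesis
    proof (cases "real N * l / B1 \<le> l")
      case True
      then have e: "real N * l / B1 / 2 \<le> l / 2" by (simp add: divide_right_mono)
      have "l * (1 - ln l) / 2 ^ (2 * ?D + 3) \<le> l" using b c d e by linarith
      then show ?thesis using LB1' by (meson ennreal_leI order_trans)
    next
      case False
      then have e: "l / 2 \<le> real N * l / B1 / 2" by (simp add: divide_right_mono)
      have "l * (1 - ln l) / 2 ^ (2 * ?D + 3) \<le> real N * l / B1" using b c d e by linarith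
      then show ?thesis using LB2 unfolding B1_def by (meson ennreal_leI order_trans)
    qed
  next
    case False
    have "- ln l = ln (1 / l)" using l by (simp add: ln_div)
    also have "\<dots> < ln 4" using False l by (subst ln_less_cancel_iff) (auto simp: field_simps)
    also have "\<dots> \<le> 4 - 1" by (rule ln_le_minus_one) simp
    finally have "1 - ln l \<le> 4" by simp
    also have "\<dots> \<le> 4 * B1" using B1 by simp
    finally have "1 - ln l \<le> 2 ^ (2 * ?D + 3)" using C by simp
    then have "l * (1 - ln l) \<le> l * 2 ^ (2 * ?D + 3)" using l by (intro mult_left_mono) auto
    then have "l * (1 - ln l) / 2 ^ (2 * ?D + 3) \<le> l" by (simp add: divide_le_eq)
    then show ?thesis using LB1' by (meson ennreal_leI order_trans)
  qed
qed

theorem lemma2p2: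
  shows "\<exists>C::real > 0. \<forall>l::real. 0 < l \<and> l < 1 \<longrightarrow>
    (\<forall>E::'a::euclidean_space set. E \<in> sets borel \<longrightarrow> (\<forall>x::'a.
      indicator {y. hl_max (indicator E) y > ennreal l} x
        \<le> ennreal (C / (l * (1 - ln l))) *
          hl_max (\<lambda>y. indicator {z. hl_max (indicator E) z > ennreal l} y
                         * hl_max (indicator E) y) x))"
proof (intro exI[of _ "(2::real) ^ (2 * DIM('a) + 3)"] conjI allI impI)
  let ?C = "(2::real) ^ (2 * DIM('a) + 3)"
  show "?C > 0" by simp
  fix l :: real and E :: "'a set" and x :: 'a
  assume l: "0 < l \<and> l < 1" and E: "E \<in> sets borel"
  let ?g = "\<lambda>y. indicator {z. ennreal l < hl_max (indicator E) z} y * hl_max (indicator E) y :: ennreal"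
  show "indicator {y. hl_max (indicator E) y > ennreal l} x \<le> ennreal (?C / (l * (1 - ln l))) * hl_max ?g x"
  proof (cases "ennreal l < hl_max (indicator E) x")
    case True
    have lnl: "ln l < 0" using l by simp
    define V where "V = l * (1 - ln l)"
    have l1: "1 - ln l > 0" using lnl by linarith
    have V: "V > 0" using l l1 unfolding V_def by (intro mult_pos_pos) auto
    have k: "ennreal (V / ?C) \<le> hl_max ?g x"
      using key[OF E, of l x] l True unfolding V_def by simp
    have "(1::ennreal) = ennreal (?C / V * (V / ?C))" using V by simp
    also have "\<dots> = ennreal (?C / V) * ennreal (V / ?C)" by (rule ennreal_mult) (use V in auto)
    also have "\<dots> \<le> ennreal (?C / V) * hl_max ?g x" by (intro mult_left_mono k) simp
    finally show ?thesis using True unfolding V_def by simp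
  next
    case False
    then show ?thesis by simp
  qed
qed


end
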